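(* Let $\mathbf y_h^k\in\mathbb A_h$ be fixed. There exists $\beta'>0$ such that, with $\beta_h':=\beta' h_{\min}$, \[\inf_{\mu_h\in\operatorname{Ker}(L_2)\setminus\{0\}}\ \sup_{\mathbf w_h\in\operatorname{Ker}(L_1)\setminus\{0\}}\frac{(\mu_h,\nabla_h\mathbf w_h)}{\|\mu_h\|_{L^2(\Omega)}\|\mathbf w_h\|_{H^2_h(\Omega)}}\ge\beta_h'.\]
   Context: $\Omega\subset\mathbb R^2$ bounded polygonal with Lipschitz boundary, $\Gamma^D\subset\partial\Omega$ relatively open, $\mathbf n$ outward normal. $\mathcal T_h$ quasi-uniform shape-regular triangulation with cell diameters $h_T\le h$, barycenters $\mathbf x_T$, $h_{\min}=\min_Th_T$. $V_h=\mathbb P^2(\mathcal T_h)^3$, $M_h=\mathbb P^0(\mathcal T_h)^{3\times2}$, $\Upsilon_h$ = piecewise constant symmetric $2\times2$ matrix fields (all discontinuous); $\nabla_h,\nabla_h^2$ broken gradient/Hessian; $(\cdot,\cdot)$ the $L^2(\Omega)$ inner product. Skeleton $\Gamma_h$: interior edges and boundary edges in $\Gamma^D$. Jumps: on interior edges with fixed unit normal $\mathbf n_e$, $[\mathbf w]=\mathbf w^--\mathbf w^+$, $[\nabla_h\mathbf w]=(\nabla_h\mathbf w^--\nabla_h\mathbf w^+)\mathbf n_e$; on boundary edges, $[\mathbf w]=\mathbf w$, $[\nabla_h\mathbf w]=(\nabla_h\mathbf w)\mathbf n$. $\|\mathbf w_h\|_{H^2_h(\Omega)}^2=\|\nabla_h^2\mathbf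 w_h\|_{L^2(\Omega)}^2+\|h^{-1/2}[\nabla_h\mathbf w_h]\|_{L^2(\Gamma_h)}^2+\|h^{-3/2}[\mathbf w_h]\|_{L^2(\Gamma_h)}^2$. $St(3,2)=\{U:U^\top U=I_2\}$, $\mathbb A_h=\{\mathbf w_h\in V_h:\nabla_h\mathbf w_h(\mathbf x_T)\in St(3,2)\ \forall T\}$. $l_h(\nabla_h\mathbf y;\mu,\gamma)=\sum_T\int_T\gamma:(\nabla_h\mathbf y^\top\mu+\mu^\top\nabla_h\mathbf y)(\mathbf x_T)\,dx$. $L_1:V_h\to\Upsilon_h$ and $L_2:M_h\to\Upsilon_h$ are defined by $(L_1\mathbf w_h,\gamma_h)=l_h(\nabla_h\mathbf y_h^k;\nabla_h\mathbf w_h,\gamma_h)$ for all $\gamma_h\in\Upsilon_h$ and $(L_2\mu_h,\zeta_h)=l_h(\nabla_h\mathbf y_h^k;\mu_h,\zeta_h)$ for all $\zeta_h\in\Upsilon_h$. *)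

theory Defs
  imports "HOL-Analysis.Analysis"
begin

type_synonym pt = "real^2"
type_synonym cell = "pt set"       (* a cell is given by its set of 3 vertices; the closed triangle is convex hull *)
type_synonym mat32 = "real^2^3"    (* 3x2 matrices: rows indexed by 3, columns by 2 *)
type_synonym sym2 = "real^2^2"

definition lipschitz_boundary :: "pt set \<Rightarrow> bool" where
  "lipschitz_boundary \<Omega> \<longleftrightarrow>
     (\<forall>x\<in>frontier \<Omega>. \<exists>r>0. \<exists>R::real^2^2. orthogonal_matrix R \<and>
        (\<exists>(g::real \<Rightarrow> real) L. (\<forall>s t. \<bar>g s - g t\<bar> \<le> L * \<bar>s - t\<bar>) \<and>
           \<Omega> \<inter> ball x r = {p \<in> ball x r. (R *v p) $ 2 > g ((R *v p) $ 1)}))"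

definition is_triangle :: "cell \<Rightarrow> bool" where
  "is_triangle V \<longleftrightarrow> card V = 3 \<and> \<not> affine_dependent V"

text \<open>Conforming triangulation of the closure of Omega: two distinct cells meet in the
  convex hull of their common vertices (empty, a common vertex, or a common edge).\<close>
definition triangulation :: "pt set \<Rightarrow> cell set \<Rightarrow> bool" where
  "triangulation \<Omega> Th \<longleftrightarrow> finite Th \<and> Th \<noteq> {} \<and> (\<forall>V\<in>Th. is_triangle V) \<and>
     (\<Union>V\<in>Th. convex hull V) = closure \<Omega> \<and>
     (\<forall>V1\<in>Th. \<forall>V2\<in>Th. V1 \<noteq> V2 \<longrightarrow> convex hull V1 \<inter> convex hull V2 = convex hull (V1 \<inter> V2))"

definition cdiam :: "cell \<Rightarrow> real" where
  "cdiam V = diameter (convex hull V)"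

definition hmax :: "cell set \<Rightarrow> real" where
  "hmax Th = Max (cdiam ` Th)"

definition hmin :: "cell set \<Rightarrow> real" where
  "hmin Th = Min (cdiam ` Th)"

definition inradius :: "cell \<Rightarrow> real" where
  "inradius V = Sup {r. \<exists>x. cball x r \<subseteq> convex hull V}"

definition shape_regular :: "real \<Rightarrow> cell set \<Rightarrow> bool" where
  "shape_regular \<sigma> Th \<longleftrightarrow> (\<forall>V\<in>Th. cdiam V \<le> \<sigma> * inradius V)"

definition quasi_uniform :: "real \<Rightarrow> cell set \<Rightarrow> bool" where
  "quasi_uniform \<kappa> Th \<longleftrightarrow> (\<forall>V\<in>Th. hmax Th \<le> \<kappa> * cdiam V)"

definition bary :: "cell \<Rightarrow> pt" where
  "bary V = (1/3) *\<^sub>R (\<Sum>v\<in>V. v)"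

definition pd :: "(pt \<Rightarrow> 'b::real_normed_vector) \<Rightarrow> 2 \<Rightarrow> pt \<Rightarrow> 'b" where
  "pd f j x = frechet_derivative f (at x) (axis j 1)"

definition jac :: "(pt \<Rightarrow> real^3) \<Rightarrow> pt \<Rightarrow> mat32" where
  "jac f x = (\<chi> i j. pd f j x $ i)"

definition hess_sq :: "(pt \<Rightarrow> real^3) \<Rightarrow> pt \<Rightarrow> real" where
  "hess_sq f x = (\<Sum>k\<in>UNIV. \<Sum>j\<in>UNIV. \<Sum>l\<in>UNIV. (pd (\<lambda>z. pd f j z) l x $ k)\<^sup>2)"

definition frob :: "real^'n^'m \<Rightarrow> real^'n^'m \<Rightarrow> real" where
  "frob A B = (\<Sum>i\<in>UNIV. \<Sum>j\<in>UNIV. A $ i $ j * B $ i $ j)"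

definition stiefel32 :: "mat32 set" where
  "stiefel32 = {U. transpose U ** U = mat 1}"

definition P2 :: "(pt \<Rightarrow> real^3) set" where
  "P2 = {p. \<exists>(c::real^3) (a::2 \<Rightarrow> real^3) (b::2 \<Rightarrow> 2 \<Rightarrow> real^3). \<forall>x.
          p x = c + (\<Sum>i\<in>UNIV. x $ i *\<^sub>R a i) + (\<Sum>i\<in>UNIV. \<Sum>j\<in>UNIV. (x $ i * x $ j) *\<^sub>R b i j)}"

definition Vh :: "cell set \<Rightarrow> (cell \<Rightarrow> pt \<Rightarrow> real^3) set" where
  "Vh Th = {w. (\<forall>V\<in>Th. w V \<in> P2) \<and> (\<forall>V. V \<notin> Th \<longrightarrow> w V = (\<lambda>_. 0))}"

definition Mh :: "cell set \<Rightarrow> (cell \<Rightarrow> mat32) set" where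
  "Mh Th = {\<mu>. \<forall>V. V \<notin> Th \<longrightarrow> \<mu> V = 0}"

definition Yh :: "cell set \<Rightarrow> (cell \<Rightarrow> sym2) set" where
  "Yh Th = {\<gamma>. (\<forall>V\<in>Th. transpose (\<gamma> V) = \<gamma> V) \<and> (\<forall>V. V \<notin> Th \<longrightarrow> \<gamma> V = 0)}"

definition Ah :: "cell set \<Rightarrow> (cell \<Rightarrow> pt \<Rightarrow> real^3) set" where
  "Ah Th = {y \<in> Vh Th. \<forall>V\<in>Th. jac (y V) (bary V) \<in> stiefel32}"

definition bgrad :: "(cell \<Rightarrow> pt \<Rightarrow> real^3) \<Rightarrow> cell \<Rightarrow> pt \<Rightarrow> mat32" where
  "bgrad w V x = jac (w V) x"

definition ipY :: "cell set \<Rightarrow> (cell \<Rightarrow> sym2) \<Rightarrow> (cell \<Rightarrow> sym2) \<Rightarrow> real" where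
  "ipY Th \<gamma> \<zeta> = (\<Sum>V\<in>Th. integral (convex hull V) (\<lambda>x. frob (\<gamma> V) (\<zeta> V)))"

definition lh :: "cell set \<Rightarrow> (cell \<Rightarrow> pt \<Rightarrow> mat32) \<Rightarrow> (cell \<Rightarrow> pt \<Rightarrow> mat32) \<Rightarrow> (cell \<Rightarrow> sym2) \<Rightarrow> real" where
  "lh Th G M \<gamma> = (\<Sum>V\<in>Th. integral (convex hull V) (\<lambda>x. frob (\<gamma> V)
      (transpose (G V (bary V)) ** M V (bary V) + transpose (M V (bary V)) ** G V (bary V))))"

definition L1 :: "cell set \<Rightarrow> (cell \<Rightarrow> pt \<Rightarrow> real^3) \<Rightarrow> (cell \<Rightarrow> pt \<Rightarrow> real^3) \<Rightarrow> (cell \<Rightarrow> sym2)" where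
  "L1 Th y w = (THE g. g \<in> Yh Th \<and> (\<forall>\<gamma>\<in>Yh Th. ipY Th g \<gamma> = lh Th (bgrad y) (bgrad w) \<gamma>))"

definition L2 :: "cell set \<Rightarrow> (cell \<Rightarrow> pt \<Rightarrow> real^3) \<Rightarrow> (cell \<Rightarrow> mat32) \<Rightarrow> (cell \<Rightarrow> sym2)" where
  "L2 Th y \<mu> = (THE g. g \<in> Yh Th \<and> (\<forall>\<zeta>\<in>Yh Th. ipY Th g \<zeta> = lh Th (bgrad y) (\<lambda>V x. \<mu> V) \<zeta>))"

definition KerL1 :: "cell set \<Rightarrow> (cell \<Rightarrow> pt \<Rightarrow> real^3) \<Rightarrow> (cell \<Rightarrow> pt \<Rightarrow> real^3) set" where
  "KerL1 Th y = {w \<in> Vh Th. L1 Th y w = (\<lambda>_. 0)}"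

definition KerL2 :: "cell set \<Rightarrow> (cell \<Rightarrow> pt \<Rightarrow> real^3) \<Rightarrow> (cell \<Rightarrow> mat32) set" where
  "KerL2 Th y = {\<mu> \<in> Mh Th. L2 Th y \<mu> = (\<lambda>_. 0)}"

definition ipMgrad :: "cell set \<Rightarrow> (cell \<Rightarrow> mat32) \<Rightarrow> (cell \<Rightarrow> pt \<Rightarrow> real^3) \<Rightarrow> real" where
  "ipMgrad Th \<mu> w = (\<Sum>V\<in>Th. integral (convex hull V) (\<lambda>x. frob (\<mu> V) (bgrad w V x)))"

definition normM :: "cell set \<Rightarrow> (cell \<Rightarrow> mat32) \<Rightarrow> real" where
  "normM Th \<mu> = sqrt (\<Sum>V\<in>Th. integral (convex hull V) (\<lambda>x. frob (\<mu> V) (\<mu> V)))"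

definition seg_int :: "pt \<Rightarrow> pt \<Rightarrow> (pt \<Rightarrow> real) \<Rightarrow> real" where
  "seg_int a b g = dist a b * integral {0..1} (\<lambda>t. g (a + t *\<^sub>R (b - a)))"

definition unit_normal :: "pt \<Rightarrow> pt \<Rightarrow> pt" where
  "unit_normal a b = (1 / norm (b - a)) *\<^sub>R (\<chi> i. if i = 1 then - ((b - a) $ 2) else (b - a) $ 1)"

definition out_normal :: "cell \<Rightarrow> pt \<Rightarrow> pt \<Rightarrow> pt" where
  "out_normal V a b = (if unit_normal a b \<bullet> (bary V - a) < 0 then unit_normal a b else - unit_normal a b)"

text \<open>Interior edges: each interior edge E = V1 \<inter> V2 is visited as 2 ordered cell pairs and
  2 ordered endpoint pairs, hence the factors 1/2. The sign of the normal n_e is irrelevant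
  in the squared norm; we use the outward normal of V1.\<close>
definition int_jumps :: "cell set \<Rightarrow> (cell \<Rightarrow> pt \<Rightarrow> real^3) \<Rightarrow> real" where
  "int_jumps Th w = (let h = hmax Th in
     (\<Sum>(V1, V2)\<in>{(V1, V2). V1 \<in> Th \<and> V2 \<in> Th \<and> V1 \<noteq> V2 \<and> card (V1 \<inter> V2) = 2}.
        (1/2) * (1/2) * (\<Sum>a\<in>V1 \<inter> V2. \<Sum>b\<in>(V1 \<inter> V2) - {a}. seg_int a b (\<lambda>x.
           h powr (-1) * (norm ((jac (w V1) x - jac (w V2) x) *v out_normal V1 a b))\<^sup>2
         + h powr (-3) * (norm (w V1 x - w V2 x))\<^sup>2))))"

definition bdry_jumps :: "pt set \<Rightarrow> cell set \<Rightarrow> (cell \<Rightarrow> pt \<Rightarrow> real^3) \<Rightarrow> real" where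
  "bdry_jumps \<Gamma>D Th w = (let h = hmax Th in
     (\<Sum>(V, E)\<in>{(V, E). V \<in> Th \<and> E \<subseteq> V \<and> card E = 2 \<and> (\<forall>a\<in>E. \<forall>b\<in>E. open_segment a b \<subseteq> \<Gamma>D)}.
        (1/2) * (\<Sum>a\<in>E. \<Sum>b\<in>E - {a}. seg_int a b (\<lambda>x.
           h powr (-1) * (norm (jac (w V) x *v out_normal V a b))\<^sup>2
         + h powr (-3) * (norm (w V x))\<^sup>2))))"

definition normH2h :: "pt set \<Rightarrow> cell set \<Rightarrow> (cell \<Rightarrow> pt \<Rightarrow> real^3) \<Rightarrow> real" where
  "normH2h \<Gamma>D Th w = sqrt ((\<Sum>V\<in>Th. integral (convex hull V) (hess_sq (w V)))
                             + int_jumps Th w + bdry_jumps \<Gamma>D Th w)"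

end

theory Submission
  imports Defs
begin


definition evec :: "mat32 \<Rightarrow> real^3" where
  "evec A = (SOME e. norm e = 1 \<and> (\<forall>j. column j A \<bullet> e = 0))"

lemma evec_ex: "\<exists>e::real^3. norm e = 1 \<and> (\<forall>j. column j (A::mat32) \<bullet> e = 0)"
proof -
  let ?S = "(\<lambda>j. column j A) ` (UNIV::2 set)"
  have "card ?S \<le> CARD(2)" by (rule card_image_le) simp
  moreover have "dim ?S \<le> card ?S"
    by (rule dim_le_card) (auto intro: span_base)
  ultimately have "dim ?S < DIM(real^3)"
    by simp
  then obtain x :: "real^3" where x: "x \<noteq> 0" "\<And>y. y \<in> span ?S \<Longrightarrow> orthogonal x y"
    by (rule orthogonal_to_subspace_exists) blast+
  have "x \<bullet> column j A = 0" for j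
    using x(2)[OF span_base[of "column j A"]] unfolding orthogonal_def by simp
  then have "\<forall>j. column j A \<bullet> (x /\<^sub>R norm x) = 0"
    by (simp add: inner_commute)
  moreover have "norm (x /\<^sub>R norm x) = 1" using x(1) by simp
  ultimately show ?thesis by blast
qed

lemma evec: "norm (evec A) = 1" "column j A \<bullet> evec A = 0"
  using someI_ex[OF evec_ex[of A]] unfolding evec_def by auto



lemma norm_sq_mat: "(norm (A::real^'n^'m))\<^sup>2 = (\<Sum>i\<in>UNIV. (norm (A $ i))\<^sup>2)"
  unfolding norm_vec_def[of A] L2_set_def by (simp add: sum_nonneg)
lemma norm_sq_vec: "(norm (v::real^'n))\<^sup>2 = (\<Sum>i\<in>UNIV. (v $ i)\<^sup>2)"
  unfolding norm_vec_def L2_set_def by (simp add: sum_nonneg)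
lemma norm_mv_le:
  fixes A :: "real^'n^'m"
  shows "norm (A *v x) \<le> norm A * norm x"
proof -
  have "(norm (A *v x))\<^sup>2 = (\<Sum>i\<in>UNIV. (A $ i \<bullet> x)\<^sup>2)"
    unfolding norm_sq_vec by (simp only: matrix_vector_mul_component)
  also have "\<dots> \<le> (\<Sum>i\<in>UNIV. (norm (A $ i))\<^sup>2 * (norm x)\<^sup>2)"
  proof (rule sum_mono)
    fix i
    have "\<bar>A $ i \<bullet> x\<bar> \<le> norm (A $ i) * norm x" by (rule Cauchy_Schwarz_ineq2)
    then have "\<bar>A $ i \<bullet> x\<bar>\<^sup>2 \<le> (norm (A $ i) * norm x)\<^sup>2"
      by (intro power_mono) auto
    then show "(A $ i \<bullet> x)\<^sup>2 \<le> (norm (A $ i))\<^sup>2 * (norm x)\<^sup>2"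
      by (simp only: power_mult_distrib power2_abs)
  qed
  also have "\<dots> = (norm A)\<^sup>2 * (norm x)\<^sup>2"
    by (simp only: sum_distrib_right[symmetric] norm_sq_mat)
  also have "\<dots> = (norm A * norm x)\<^sup>2"
    by (simp only: power_mult_distrib)
  finally have "(norm (A *v x))\<^sup>2 \<le> (norm A * norm x)\<^sup>2" .
  then show ?thesis
    by (rule power2_le_imp_le) simp
qed


definition wq :: "mat32 \<Rightarrow> pt \<Rightarrow> real \<Rightarrow> pt \<Rightarrow> real^3" where
  "wq A b c = (\<lambda>x. A *v (x - b) + (c * ((x - b) \<bullet> (x - b))) *\<^sub>R evec A)"
lemma mv_deriv: "((*v) (A::mat32) has_derivative (*v) A) (at x)"
  by (rule bounded_linear_imp_has_derivative) simp
lemma wq_deriv: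
  "(wq A b c has_derivative (\<lambda>h. A *v h + (2 * c * ((x - b) \<bullet> h)) *\<^sub>R evec A)) (at x)"
proof -
  have "((\<lambda>x. A *v x - A *v b + (c * ((x - b) \<bullet> (x - b))) *\<^sub>R evec A) has_derivative
     (\<lambda>h. A *v h - 0 + ((c * ((x - b) \<bullet> (x - b))) *\<^sub>R 0 + (c * ((x - b) \<bullet> (h - 0) + (h - 0) \<bullet> (x - b)) + 0 * ((x - b) \<bullet> (x - b))) *\<^sub>R evec A))) (at x)"
    by (intro derivative_intros mv_deriv)
  then show ?thesis unfolding wq_def
    by (simp add: matrix_vector_mult_diff_distrib inner_commute algebra_simps)
qed
lemma nth_deriv_comp: "(g has_derivative g') F \<Longrightarrow> ((\<lambda>x. g x $ j) has_derivative (\<lambda>h. g' h $ j)) F"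
  by (rule bounded_linear.has_derivative[OF bounded_linear_vec_nth])

lemma pd_wq: "pd (wq A b c) j x = column j A + (2 * c * (x - b) $ j) *\<^sub>R evec A"
  unfolding pd_def frechet_derivative_at[OF wq_deriv, symmetric]
  by (simp add: matrix_vector_mult_basis inner_axis)

lemma pd_wq_deriv:
  "((\<lambda>z. pd (wq A b c) j z) has_derivative (\<lambda>h. (2 * c * h $ j) *\<^sub>R evec A)) (at x)"
proof -
  have d1: "((\<lambda>z. (z - b) $ j) has_derivative (\<lambda>h. (h - 0) $ j)) (at x)"
    by (intro nth_deriv_comp derivative_intros)
  have "((\<lambda>z. column j A + (2 * c * (z - b) $ j) *\<^sub>R evec A) has_derivative
      (\<lambda>h. 0 + ((2 * c * (x - b) $ j) *\<^sub>R 0 + (2 * c * (h - 0) $ j + 0 * (x - b) $ j) *\<^sub>R evec A))) (at x)"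
    by (intro derivative_intros d1)
  then show ?thesis unfolding pd_wq by simp
qed

lemma pd2_wq: "pd (\<lambda>z. pd (wq A b c) j z) l x = (if l = j then 2 * c else 0) *\<^sub>R evec A"
  unfolding pd_def[of "\<lambda>z. pd (wq A b c) j z"] frechet_derivative_at[OF pd_wq_deriv, symmetric]
  by (simp add: axis_def)

lemma jac_wq: "jac (wq A b c) x = (\<chi> i j. A $ i $ j + 2 * c * (x - b) $ j * evec A $ i)"
  unfolding jac_def pd_wq by (simp add: column_def)


lemma col_e: "(\<Sum>i\<in>UNIV. A $ i $ j * evec A $ i) = 0"
  using evec(2)[of j A] by (simp add: column_def inner_vec_def)

lemma hess_wq: "hess_sq (wq A b c) x = 8 * c\<^sup>2"
proof -
  have "hess_sq (wq A b c) x = (\<Sum>k\<in>UNIV. \<Sum>j\<in>(UNIV::2 set). \<Sum>l\<in>(UNIV::2 set). (if l = j then (2 * c * evec A $ k)\<^sup>2 else 0))"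
    unfolding hess_sq_def pd2_wq by (intro sum.cong refl) auto
  also have "\<dots> = (\<Sum>k\<in>UNIV. 2 * (2 * c * evec A $ k)\<^sup>2)"
    by simp
  also have "\<dots> = 8 * c\<^sup>2 * (\<Sum>k\<in>UNIV. (evec A $ k)\<^sup>2)"
    by (simp add: sum_distrib_left power_mult_distrib mult.assoc)
  also have "(\<Sum>k\<in>UNIV. (evec A $ k)\<^sup>2) = 1"
    using evec(1)[of A] norm_sq_vec[of "evec A"] by simp
  finally show ?thesis by simp
qed


lemma jac_wq_mv: "jac (wq A b c) x *v n = A *v n + (2 * c * ((x - b) \<bullet> n)) *\<^sub>R evec A"
proof -
  have "(jac (wq A b c) x *v n) $ i = (A *v n + (2 * c * ((x - b) \<bullet> n)) *\<^sub>R evec A) $ i" for i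
  proof -
    have "(jac (wq A b c) x *v n) $ i = (\<Sum>j\<in>UNIV. A $ i $ j * n $ j + (2 * c * evec A $ i) * ((x - b) $ j * n $ j))"
    proof -
      have "(jac (wq A b c) x *v n) $ i = (\<Sum>j\<in>UNIV. (A $ i $ j + 2 * c * (x - b) $ j * evec A $ i) * n $ j)"
        unfolding jac_wq matrix_vector_mult_def by simp
      also have "\<dots> = (\<Sum>j\<in>UNIV. A $ i $ j * n $ j + (2 * c * evec A $ i) * ((x - b) $ j * n $ j))"
        by (rule sum.cong) (simp_all add: algebra_simps)
      finally show ?thesis .
    qed
    also have "\<dots> = (\<Sum>j\<in>UNIV. A $ i $ j * n $ j) + (2 * c * evec A $ i) * (\<Sum>j\<in>UNIV. (x - b) $ j * n $ j)"
      by (simp only: sum.distrib sum_distrib_left)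
    also have "\<dots> = (A *v n + (2 * c * ((x - b) \<bullet> n)) *\<^sub>R evec A) $ i"
      by (simp add: matrix_vector_mult_def inner_vec_def)
    finally show ?thesis .
  qed
  then show ?thesis by (simp add: vec_eq_iff)
qed

lemma frob_wq: "frob A (jac (wq A b c) x) = frob A A"
proof -
  have e1: "jac (wq A b c) x $ i $ j = A $ i $ j + 2 * c * (x - b) $ j * evec A $ i" for i j
    unfolding jac_wq by simp
  have "frob A (jac (wq A b c) x) = (\<Sum>i\<in>UNIV. \<Sum>j\<in>UNIV. A $ i $ j * A $ i $ j + (2 * c * (x - b) $ j) * (A $ i $ j * evec A $ i))"
    unfolding frob_def e1 by (intro sum.cong refl) (simp add: distrib_left)
  also have "\<dots> = frob A A + (\<Sum>i\<in>UNIV. \<Sum>j\<in>UNIV. (2 * c * (x - b) $ j) * (A $ i $ j * evec A $ i))"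
    unfolding frob_def by (simp only: sum.distrib)
  also have "(\<Sum>i\<in>UNIV. \<Sum>j\<in>UNIV. (2 * c * (x - b) $ j) * (A $ i $ j * evec A $ i)) = (\<Sum>j\<in>UNIV. (2 * c * (x - b) $ j) * (\<Sum>i\<in>UNIV. A $ i $ j * evec A $ i))"
    unfolding sum_distrib_left by (rule sum.swap)
  also have "\<dots> = 0" by (simp add: col_e)
  finally show ?thesis by simp
qed

lemma jac_wq_mv_le: "norm (jac (wq A b c) x *v n) \<le> norm A * norm n + 2 * \<bar>c\<bar> * norm (x - b) * norm n"
proof -
  have "norm (jac (wq A b c) x *v n) \<le> norm (A *v n) + norm ((2 * c * ((x - b) \<bullet> n)) *\<^sub>R evec A)"
    unfolding jac_wq_mv by (rule norm_triangle_ineq)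
  also have "norm ((2 * c * ((x - b) \<bullet> n)) *\<^sub>R evec A) = 2 * \<bar>c\<bar> * \<bar>(x - b) \<bullet> n\<bar>"
    using evec(1)[of A] by (simp add: abs_mult)
  also have "\<dots> \<le> 2 * \<bar>c\<bar> * (norm (x - b) * norm n)"
    by (intro mult_left_mono Cauchy_Schwarz_ineq2) auto
  finally show ?thesis using norm_mv_le[of A n] by (simp add: mult.assoc)
qed


lemma wq_le: "norm (wq A b c x) \<le> norm A * norm (x - b) + \<bar>c\<bar> * (norm (x - b))\<^sup>2"
proof -
  have "norm (wq A b c x) \<le> norm (A *v (x - b)) + norm ((c * ((x - b) \<bullet> (x - b))) *\<^sub>R evec A)"
    unfolding wq_def by (rule norm_triangle_ineq)
  also have "norm ((c * ((x - b) \<bullet> (x - b))) *\<^sub>R evec A) = \<bar>c\<bar> * (norm (x - b))\<^sup>2"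
    using evec(1)[of A] by (simp add: abs_mult power2_norm_eq_inner)
  finally show ?thesis using norm_mv_le[of A "x - b"] by simp
qed


lemma jac_wq_b: "jac (wq A b c) b = A"
  unfolding jac_wq by (simp add: vec_eq_iff)







lemma area_cball: "r \<ge> 0 \<Longrightarrow> measure lebesgue (cball (c::real^2) r) = r\<^sup>2 * pi"
proof -
  assume r: "r \<ge> 0"
  have "measure lebesgue (cball c r) = measure lborel (cball c r)"
    by (rule measure_completion) simp
  also have "\<dots> = r\<^sup>2 * pi" using r by (simp add: content_cball_conv_ball circle_area)
  finally show ?thesis .
qed

lemma tri_finite: "is_triangle V \<Longrightarrow> finite V"
  unfolding is_triangle_def by (metis card.infinite zero_neq_numeral)

lemma tri_card: "is_triangle V \<Longrightarrow> card V = 3"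
  unfolding is_triangle_def by simp

lemma tri_compact: "is_triangle V \<Longrightarrow> compact (convex hull V)"
  by (simp add: tri_finite compact_convex_hull finite_imp_compact)

lemma tri_bounded: "is_triangle V \<Longrightarrow> bounded (convex hull V)"
  by (simp add: tri_compact compact_imp_bounded)

lemma tri_lmeas: "is_triangle V \<Longrightarrow> convex hull V \<in> lmeasurable"
  by (simp add: tri_compact lmeasurable_compact)

lemma tri_dist: "is_triangle V \<Longrightarrow> x \<in> convex hull V \<Longrightarrow> y \<in> convex hull V \<Longrightarrow> dist x y \<le> cdiam V"
  unfolding cdiam_def by (rule diameter_bounded_bound[OF tri_bounded])

lemma tri_vert: "v \<in> V \<Longrightarrow> v \<in> convex hull V"
  by (rule hull_inc)

lemma tri_bary: "is_triangle V \<Longrightarrow> bary V \<in> convex hull V"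
proof -
  assume t: "is_triangle V"
  have "(\<Sum>v\<in>V. (1/3::real) *\<^sub>R v) \<in> convex hull V"
    by (rule convex_sum) (auto simp: t tri_finite tri_card hull_inc)
  then show ?thesis unfolding bary_def by (simp add: scaleR_sum_right)
qed

lemma tri_cdiam_pos: "is_triangle V \<Longrightarrow> cdiam V > 0"
proof -
  assume t: "is_triangle V"
  then have "card V = 3" by (rule tri_card)
  then obtain a b c where abc: "V = {a, b, c}" "a \<noteq> b" by (auto simp: card_3_iff)
  have "0 < dist a b" using abc by simp
  also have "\<dots> \<le> cdiam V" using t abc by (intro tri_dist) (auto intro: hull_inc)
  finally show ?thesis .
qed

lemma tri_area_le: "is_triangle V \<Longrightarrow> measure lebesgue (convex hull V) \<le> pi * (cdiam V)\<^sup>2"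
proof -
  assume t: "is_triangle V"
  obtain v where v: "v \<in> V" using tri_card[OF t] by fastforce
  have "convex hull V \<subseteq> cball v (cdiam V)"
    using t v by (auto simp: dist_commute intro!: tri_dist hull_inc)
  then have "measure lebesgue (convex hull V) \<le> measure lebesgue (cball v (cdiam V))"
    by (intro measure_mono_fmeasurable) (auto simp: t tri_lmeas lmeasurable_compact intro: fmeasurableD)
  also have "\<dots> = pi * (cdiam V)\<^sup>2" using tri_cdiam_pos[OF t] area_cball[of "cdiam V" v] by (simp add: mult.commute)
  finally show ?thesis .
qed

lemma tri_area_ge:
  assumes t: "is_triangle V" and sr: "cdiam V \<le> \<sigma> * inradius V"
  shows "\<sigma> > 0 \<and> pi * (cdiam V / (2 * \<sigma>))\<^sup>2 \<le> measure lebesgue (convex hull V)"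
proof -
  define S where "S = {r. \<exists>x. cball x r \<subseteq> convex hull V}"
  have R: "inradius V = Sup S" unfolding inradius_def S_def by simp
  obtain v where v: "v \<in> V" using tri_card[OF t] by fastforce
  have "0 \<in> S" unfolding S_def using v by (auto intro!: exI[of _ v] hull_inc)
  have bdd: "r \<le> cdiam V" if "r \<in> S" for r
  proof (cases "r \<le> 0")
    case True then show ?thesis using tri_cdiam_pos[OF t] by simp
  next
    case False
    from that obtain x where x: "cball x r \<subseteq> convex hull V" unfolding S_def by auto
    have n1: "norm (r *\<^sub>R (axis 1 1 :: real^2)) = r" using False by simp
    have "x \<in> cball x r" "x + r *\<^sub>R axis 1 1 \<in> cball x r"
      using False n1 by (simp_all add: dist_norm)
    then have "x \<in> convex hull V" "x + r *\<^sub>R axis 1 1 \<in> convex hull V"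
      using x by blast+
    then have "dist x (x + r *\<^sub>R axis 1 1) \<le> cdiam V" by (rule tri_dist[OF t])
    then show ?thesis using False by (simp add: dist_norm)
  qed
  have bS: "bdd_above S" by (rule bdd_aboveI[of _ "cdiam V"]) (rule bdd)
  have R0: "inradius V \<ge> 0" unfolding R using \<open>0 \<in> S\<close> bS by (rule cSup_upper)
  have cpos: "cdiam V > 0" by (rule tri_cdiam_pos[OF t])
  have sp: "\<sigma> > 0"
  proof (rule ccontr)
    assume "\<not> \<sigma> > 0"
    then have "\<sigma> * inradius V \<le> 0" using R0 by (simp add: mult_nonpos_nonneg)
    then show False using sr cpos by simp
  qed
  have Rpos: "inradius V > 0" using sr cpos R0 by (cases "inradius V = 0") auto
  have "inradius V / 2 < Sup S" using Rpos R by simp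
  then obtain r where "r \<in> S" "inradius V / 2 < r"
    using less_cSup_iff[of S] \<open>0 \<in> S\<close> bS by blast
  then obtain x where x: "cball x r \<subseteq> convex hull V" unfolding S_def by auto
  have sub: "cball x (inradius V / 2) \<subseteq> convex hull V"
  proof -
    have "cball x (inradius V / 2) \<subseteq> cball x r" using \<open>inradius V / 2 < r\<close> by (intro subset_cball) simp
    then show ?thesis using x by blast
  qed
  have "measure lebesgue (cball x (inradius V / 2)) \<le> measure lebesgue (convex hull V)"
    by (intro measure_mono_fmeasurable sub) (auto simp: t tri_lmeas lmeasurable_compact intro: fmeasurableD)
  then have m: "(inradius V / 2)\<^sup>2 * pi \<le> measure lebesgue (convex hull V)"
    using area_cball[of "inradius V / 2" x] Rpos by simp
  have "cdiam V / (2 * \<sigma>) \<le> inradius V / 2"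
    using sr sp by (simp add: field_simps)
  then have "(cdiam V / (2 * \<sigma>))\<^sup>2 \<le> (inradius V / 2)\<^sup>2"
    using cpos sp by (intro power_mono) auto
  then have pm: "pi * (cdiam V / (2 * \<sigma>))\<^sup>2 \<le> pi * (inradius V / 2)\<^sup>2"
    by (intro mult_left_mono) auto
  have "pi * (inradius V / 2)\<^sup>2 = (inradius V / 2)\<^sup>2 * pi" by simp
  with m pm sp show ?thesis by linarith
qed



lemma tr_finite: "triangulation \<Omega> Th \<Longrightarrow> finite Th"
  unfolding triangulation_def by simp
lemma tr_tri: "triangulation \<Omega> Th \<Longrightarrow> V \<in> Th \<Longrightarrow> is_triangle V"
  unfolding triangulation_def by simp
lemma tr_ne: "triangulation \<Omega> Th \<Longrightarrow> Th \<noteq> {}"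
  unfolding triangulation_def by simp
lemma hmax_ge: "triangulation \<Omega> Th \<Longrightarrow> V \<in> Th \<Longrightarrow> cdiam V \<le> hmax Th"
  unfolding hmax_def by (rule Max_ge) (auto simp: tr_finite)
lemma hmin_le: "triangulation \<Omega> Th \<Longrightarrow> V \<in> Th \<Longrightarrow> hmin Th \<le> cdiam V"
  unfolding hmin_def by (rule Min_le) (auto simp: tr_finite)
lemma hmin_in: "triangulation \<Omega> Th \<Longrightarrow> \<exists>V\<in>Th. hmin Th = cdiam V"
proof -
  assume tr: "triangulation \<Omega> Th"
  have "hmin Th \<in> cdiam ` Th" unfolding hmin_def
    by (rule Min_in) (use tr tr_finite tr_ne in auto)
  then show ?thesis by auto
qed
lemma hmin_pos: "triangulation \<Omega> Th \<Longrightarrow> hmin Th > 0"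
  using hmin_in tr_tri tri_cdiam_pos by metis

lemma tr_inter_card:
  assumes tr: "triangulation \<Omega> Th" and "V2 \<in> Th" "V3 \<in> Th" "V2 \<noteq> V3"
  shows "card (V2 \<inter> V3) \<le> 2"
proof -
  have t2: "is_triangle V2" and t3: "is_triangle V3" using assms tr_tri by auto
  have f: "finite V2" "finite V3" using t2 t3 tri_finite by auto
  have le: "card (V2 \<inter> V3) \<le> 3" using card_mono[OF f(1), of "V2 \<inter> V3"] tri_card[OF t2] by simp
  have "card (V2 \<inter> V3) \<noteq> 3"
  proof
    assume c: "card (V2 \<inter> V3) = 3"
    have "V2 \<inter> V3 = V2" by (rule card_subset_eq[OF f(1)]) (auto simp: c tri_card[OF t2])
    moreover have "V2 \<inter> V3 = V3" by (rule card_subset_eq[OF f(2)]) (auto simp: c tri_card[OF t3])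
    ultimately show False using \<open>V2 \<noteq> V3\<close> by simp
  qed
  with le show ?thesis by simp
qed

lemma tr_negl:
  assumes tr: "triangulation \<Omega> Th" and "V2 \<in> Th" "V3 \<in> Th" "V2 \<noteq> V3"
  shows "negligible (convex hull V2 \<inter> convex hull V3)"
proof -
  have eq: "convex hull V2 \<inter> convex hull V3 = convex hull (V2 \<inter> V3)"
    using tr assms unfolding triangulation_def by blast
  have f: "finite (V2 \<inter> V3)" using assms tr_tri tri_finite by blast
  have "interior (convex hull (V2 \<inter> V3)) = {}"
    by (rule empty_interior_convex_hull[OF f]) (use tr_inter_card[OF assms] in simp)
  then show ?thesis unfolding eq by (simp add: negligible_convex_interior)
qed

lemma neighbors_card:
  assumes tr: "triangulation \<Omega> Th" and V1: "V1 \<in> Th"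
    and amin: "\<And>V. V \<in> Th \<Longrightarrow> amin \<le> measure lebesgue (convex hull V)"
  shows "real (card {V2\<in>Th. V2 \<noteq> V1 \<and> card (V1 \<inter> V2) = 2}) * amin \<le> pi * (2 * hmax Th)\<^sup>2"
proof -
  define N where "N = {V2\<in>Th. V2 \<noteq> V1 \<and> card (V1 \<inter> V2) = 2}"
  have fN: "finite N" unfolding N_def using tr_finite[OF tr] by simp
  have NT: "N \<subseteq> Th" unfolding N_def by auto
  have tri: "\<And>V. V \<in> Th \<Longrightarrow> is_triangle V" using tr tr_tri by blast
  have "measure lebesgue (\<Union>(((hull) convex) ` N)) = (\<Sum>V\<in>N. measure lebesgue (convex hull V))"
  proof (rule measure_negligible_finite_Union_image[OF fN])
    show "\<And>x. x \<in> N \<Longrightarrow> convex hull x \<in> lmeasurable" using NT tri tri_lmeas by blast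
    show "pairwise (\<lambda>x y. negligible (convex hull x \<inter> convex hull y)) N"
      unfolding pairwise_def using NT tr_negl[OF tr] by blast
  qed
  also have "\<dots> \<ge> (\<Sum>V\<in>N. amin)" by (rule sum_mono) (use NT amin in blast)
  finally have ge: "real (card N) * amin \<le> measure lebesgue (\<Union>(((hull) convex) ` N))" by simp
  have sub: "\<Union>(((hull) convex) ` N) \<subseteq> cball (bary V1) (2 * hmax Th)"
  proof
    fix x assume "x \<in> \<Union>(((hull) convex) ` N)"
    then obtain V2 where V2: "V2 \<in> N" "x \<in> convex hull V2" by auto
    then have "card (V1 \<inter> V2) = 2" unfolding N_def by simp
    then obtain p where p: "p \<in> V1" "p \<in> V2" by (metis card.empty disjoint_iff zero_neq_numeral)
    have "dist (bary V1) p \<le> cdiam V1"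
      using tri[OF V1] p by (intro tri_dist tri_bary) (auto intro: hull_inc)
    moreover have "dist p x \<le> cdiam V2"
      using tri V2 NT p by (intro tri_dist) (auto intro: hull_inc)
    moreover have "cdiam V1 \<le> hmax Th" "cdiam V2 \<le> hmax Th"
      using hmax_ge[OF tr] V1 V2 NT by auto
    ultimately show "x \<in> cball (bary V1) (2 * hmax Th)"
      using dist_triangle[of "bary V1" x p] by (simp add: dist_commute)
  qed
  have cmp: "compact (\<Union>(((hull) convex) ` N))"
    using fN NT tri tri_compact by (intro compact_UN) auto
  have "measure lebesgue (\<Union>(((hull) convex) ` N)) \<le> measure lebesgue (cball (bary V1) (2 * hmax Th))"
    by (intro measure_mono_fmeasurable sub) (auto simp: cmp lmeasurable_compact intro: fmeasurableD)
  also have "\<dots> = pi * (2 * hmax Th)\<^sup>2"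
    using area_cball[of "2 * hmax Th" "bary V1"] hmax_ge[OF tr V1] tri_cdiam_pos[OF tri[OF V1]]
    by (simp add: mult.commute)
  finally show ?thesis using ge unfolding N_def by simp
qed





lemma wq_P2: "wq A b c \<in> P2"
proof -
  let ?e = "evec A"
  define c0 where "c0 = - (A *v b) + (c * (b \<bullet> b)) *\<^sub>R ?e"
  define a where "a = (\<lambda>i::2. column i A + (-2 * c * b $ i) *\<^sub>R ?e)"
  define bb where "bb = (\<lambda>i j::2. (if i = j then c else 0) *\<^sub>R ?e)"
  have "wq A b c x = c0 + (\<Sum>i\<in>UNIV. x $ i *\<^sub>R a i) + (\<Sum>i\<in>UNIV. \<Sum>j\<in>UNIV. (x $ i * x $ j) *\<^sub>R bb i j)" for x
  proof -
    have i1: "(x - b) \<bullet> (x - b) = x \<bullet> x - 2 * (b \<bullet> x) + b \<bullet> b"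
      by (simp add: inner_diff algebra_simps inner_commute)
    have i2: "(\<Sum>i\<in>UNIV. \<Sum>j\<in>UNIV. (x $ i * x $ j) *\<^sub>R bb i j) = (c * (x \<bullet> x)) *\<^sub>R ?e"
    proof -
      have "(\<Sum>i\<in>UNIV. \<Sum>j\<in>UNIV. (x $ i * x $ j) *\<^sub>R bb i j) = (\<Sum>i\<in>UNIV. (c * (x $ i * x $ i)) *\<^sub>R ?e)"
      proof (intro sum.cong refl)
        fix i
        have "\<And>j. (x $ i * x $ j) *\<^sub>R bb i j = (if i = j then (c * (x $ i * x $ i)) *\<^sub>R ?e else 0)"
          unfolding bb_def by auto
        then show "(\<Sum>j\<in>UNIV. (x $ i * x $ j) *\<^sub>R bb i j) = (c * (x $ i * x $ i)) *\<^sub>R ?e"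
          by simp
      qed
      also have "\<dots> = (c * (\<Sum>i\<in>UNIV. x $ i * x $ i)) *\<^sub>R ?e"
        by (simp add: scaleR_sum_left sum_distrib_left)
      also have "(\<Sum>i\<in>UNIV. x $ i * x $ i) = x \<bullet> x" by (simp add: inner_vec_def)
      finally show ?thesis .
    qed
    have i3: "(\<Sum>i\<in>UNIV. x $ i *\<^sub>R a i) = A *v x + (-2 * c * (b \<bullet> x)) *\<^sub>R ?e"
    proof -
      have "(\<Sum>i\<in>UNIV. x $ i *\<^sub>R a i) = (\<Sum>i\<in>UNIV. x $ i *\<^sub>R column i A) + (\<Sum>i\<in>UNIV. (-2 * c * (b $ i * x $ i)) *\<^sub>R ?e)"
        unfolding a_def sum.distrib[symmetric] by (intro sum.cong refl) (simp add: scaleR_right_diff_distrib mult.commute mult.left_commute)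
      also have "(\<Sum>i\<in>UNIV. (-2 * c * (b $ i * x $ i)) *\<^sub>R ?e) = (-2 * c * (b \<bullet> x)) *\<^sub>R ?e"
        by (simp only: scaleR_sum_left[symmetric]) (simp add: sum_distrib_left inner_vec_def)
      also have "(\<Sum>i\<in>UNIV. x $ i *\<^sub>R column i A) = A *v x" by (simp add: matrix_mult_sum scalar_mult_eq_scaleR)
      finally show ?thesis .
    qed
    show ?thesis unfolding wq_def i1 i2 i3 c0_def
      by (simp add: matrix_vector_mult_diff_distrib algebra_simps)
  qed
  then show ?thesis unfolding P2_def by blast
qed



lemma int_const:
  assumes "S \<in> lmeasurable"
  shows "integral S (\<lambda>x. c) = c * measure lebesgue S"
proof -
  have "integral S (\<lambda>x. c * 1) = c * integral S (\<lambda>x. 1::real)" by (rule integral_mult_right)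
  then show ?thesis using lmeasure_integral[OF assms] by simp
qed

lemma integral_01_le:
  fixes g :: "real \<Rightarrow> real"
  assumes "\<And>t. t \<in> {0..1} \<Longrightarrow> g t \<le> M" "0 \<le> M"
  shows "integral {0..1} g \<le> M"
proof (cases "g integrable_on {0..1}")
  case int: True
  have "integral {0..1} g \<le> integral {0..1} (\<lambda>t::real. M)"
    using integral_le[of g "{0..1}" "\<lambda>t. M"] int assms by auto
  then show ?thesis by simp
next
  case False then show ?thesis by (simp add: not_integrable_integral assms)
qed

lemma integral_nonneg_any:
  fixes g :: "'a::euclidean_space \<Rightarrow> real"
  assumes "\<And>t. t \<in> S \<Longrightarrow> 0 \<le> g t"
  shows "0 \<le> integral S g"
proof (cases "g integrable_on S")
  case True
  then show ?thesis by (intro integral_nonneg) (auto simp: assms)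
next
  case False then show ?thesis by (simp add: not_integrable_integral)
qed

lemma unit_normal_le: "norm (unit_normal a b) \<le> 1"
proof -
  let ?d = "b - a"
  let ?r = "(\<chi> i. if i = 1 then - (?d $ 2) else ?d $ 1) :: real^2"
  have "(norm ?r)\<^sup>2 = (norm ?d)\<^sup>2" unfolding norm_sq_vec by (simp add: sum_2 power2_commute)
  then have nr: "norm ?r = norm ?d" by (simp add: power2_eq_iff_nonneg)
  show ?thesis
  proof (cases "a = b")
    case True then show ?thesis by (simp add: unit_normal_def)
  next
    case False
    then have "norm ?d > 0" by simp
    then show ?thesis unfolding unit_normal_def using nr by simp
  qed
qed

lemma out_normal_le: "norm (out_normal V a b) \<le> 1"
  unfolding out_normal_def using unit_normal_le by auto

lemma seg_int_le:
  assumes "dist a b \<le> H" "0 \<le> B" "\<And>t. t \<in> {0..1} \<Longrightarrow> g (a + t *\<^sub>R (b - a)) \<le> B"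
  shows "seg_int a b g \<le> H * B"
proof -
  have "integral {0..1} (\<lambda>t. g (a + t *\<^sub>R (b - a))) \<le> B"
    by (rule integral_01_le) (use assms in auto)
  then have "seg_int a b g \<le> dist a b * B"
    unfolding seg_int_def by (intro mult_left_mono) auto
  also have "\<dots> \<le> H * B" using assms by (intro mult_right_mono) auto
  finally show ?thesis .
qed

lemma seg_int_nonneg:
  assumes "\<And>t. t \<in> {0..1} \<Longrightarrow> 0 \<le> g (a + t *\<^sub>R (b - a))"
  shows "0 \<le> seg_int a b g"
  unfolding seg_int_def by (intro mult_nonneg_nonneg integral_nonneg_any) (use assms in auto)

lemma seg_in_hull:
  assumes "a \<in> V" "b \<in> V" "t \<in> {0..1}"
  shows "a + t *\<^sub>R (b - a) \<in> convex hull V"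
proof -
  have "(1 - t) *\<^sub>R a + t *\<^sub>R b \<in> convex hull V"
    using assms by (intro convexD[OF convex_convex_hull]) (auto intro: hull_inc)
  moreover have "(1 - t) *\<^sub>R a + t *\<^sub>R b = a + t *\<^sub>R (b - a)" by (simp add: algebra_simps)
  ultimately show ?thesis by simp
qed

lemma wq_bound:
  assumes H: "H > 0" and xb: "norm (x - b) \<le> H"
  shows "norm (wq A b (norm A / H) x) \<le> 2 * norm A * H"
proof -
  have "norm (wq A b (norm A / H) x) \<le> norm A * norm (x - b) + \<bar>norm A / H\<bar> * (norm (x - b))\<^sup>2"
    by (rule wq_le)
  also have "\<bar>norm A / H\<bar> = norm A / H" using H by simp
  also have "norm A * norm (x - b) \<le> norm A * H" using xb by (intro mult_left_mono) auto
  also have "(norm (x - b))\<^sup>2 \<le> H\<^sup>2" using xb by (intro power_mono) auto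
  then have "norm A / H * (norm (x - b))\<^sup>2 \<le> norm A / H * H\<^sup>2" by (intro mult_left_mono) (use H in auto)
  also have "norm A / H * H\<^sup>2 = norm A * H" using H by (simp add: power2_eq_square)
  finally show ?thesis by (simp add: algebra_simps)
qed

lemma jac_bound:
  assumes H: "H > 0" and xb: "norm (x - b) \<le> H" and n: "norm n \<le> 1"
  shows "norm (jac (wq A b (norm A / H)) x *v n) \<le> 3 * norm A"
proof -
  have "norm (jac (wq A b (norm A / H)) x *v n) \<le> norm A * norm n + 2 * \<bar>norm A / H\<bar> * norm (x - b) * norm n"
    by (rule jac_wq_mv_le)
  also have "\<bar>norm A / H\<bar> = norm A / H" using H by simp
  also have "norm A * norm n \<le> norm A" using n by (simp add: mult_left_le)
  also have "2 * (norm A / H) * norm (x - b) * norm n \<le> 2 * (norm A / H) * H * 1"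
    using xb n H by (intro mult_mono) auto
  also have "2 * (norm A / H) * H * 1 = 2 * norm A" using H by simp
  finally show ?thesis by simp
qed




lemma jump_pt:
  fixes H p q s1 s2 :: real
  assumes H: "H > 0" and p: "0 \<le> p" "p \<le> 3 * (s1 + s2)" and q: "0 \<le> q" "q \<le> 2 * H * (s1 + s2)"
    and s: "s1 \<ge> 0" "s2 \<ge> 0"
  shows "H powr (-1) * p\<^sup>2 + H powr (-3) * q\<^sup>2 \<le> 26 * (s1\<^sup>2 + s2\<^sup>2) / H"
proof -
  have h1: "H powr (-1) = 1 / H" using H by (simp add: powr_minus_divide)
  have h3: "H powr (-3) = 1 / H^3" using H by (simp add: powr_minus_divide powr_numeral)
  have "p\<^sup>2 \<le> (3 * (s1 + s2))\<^sup>2" using p by (intro power_mono) auto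
  also have "(3 * (s1 + s2))\<^sup>2 = 9 * (s1 + s2)\<^sup>2" by (simp only: power_mult_distrib) simp
  finally have "p\<^sup>2 / H \<le> 9 * (s1 + s2)\<^sup>2 / H" using H by (simp add: divide_right_mono)
  then have A: "1 / H * p\<^sup>2 \<le> 9 * (s1 + s2)\<^sup>2 / H" by simp
  have "q\<^sup>2 \<le> (2 * H * (s1 + s2))\<^sup>2" using q by (intro power_mono) auto
  then have "1 / H^3 * q\<^sup>2 \<le> 1 / H^3 * (2 * H * (s1 + s2))\<^sup>2" using H by (intro mult_left_mono) auto
  also have "1 / H^3 * (2 * H * (s1 + s2))\<^sup>2 = 4 * (s1 + s2)\<^sup>2 / H"
    using H by (simp add: power_mult_distrib power2_eq_square power3_eq_cube field_simps)
  finally have B: "1 / H^3 * q\<^sup>2 \<le> 4 * (s1 + s2)\<^sup>2 / H" .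
  have "0 \<le> (s1 - s2)\<^sup>2" by simp
  then have "(s1 + s2)\<^sup>2 \<le> 2 * (s1\<^sup>2 + s2\<^sup>2)" by (simp add: power2_eq_square algebra_simps)
  then have C: "13 * (s1 + s2)\<^sup>2 / H \<le> 26 * (s1\<^sup>2 + s2\<^sup>2) / H" using H by (simp add: divide_right_mono)
  have "9 * (s1 + s2)\<^sup>2 / H + 4 * (s1 + s2)\<^sup>2 / H = 13 * (s1 + s2)\<^sup>2 / H" by (simp add: field_simps)
  then show ?thesis unfolding h1 h3 using A B C by linarith
qed

lemma double_sum_le:
  fixes g :: "'a \<Rightarrow> 'a \<Rightarrow> real"
  assumes f: "finite E" and c: "card E = 2" and B: "0 \<le> B"
    and le: "\<And>a b. a \<in> E \<Longrightarrow> b \<in> E - {a} \<Longrightarrow> g a b \<le> B"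
  shows "(\<Sum>a\<in>E. \<Sum>b\<in>E - {a}. g a b) \<le> 4 * B"
proof -
  have "(\<Sum>b\<in>E - {a}. g a b) \<le> 2 * B" if a: "a \<in> E" for a
  proof -
    have "(\<Sum>b\<in>E - {a}. g a b) \<le> of_nat (card (E - {a})) * B"
      by (rule sum_bounded_above) (use le a in auto)
    also have "\<dots> \<le> 2 * B" using c a f B by (intro mult_right_mono) auto
    finally show ?thesis .
  qed
  then have "(\<Sum>a\<in>E. \<Sum>b\<in>E - {a}. g a b) \<le> of_nat (card E) * (2 * B)"
    by (intro sum_bounded_above) auto
  then show ?thesis using c by simp
qed

lemma double_sum_nonneg:
  fixes g :: "'a \<Rightarrow> 'a \<Rightarrow> real"
  assumes "\<And>a b. a \<in> E \<Longrightarrow> b \<in> E - {a} \<Longrightarrow> 0 \<le> g a b"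
  shows "0 \<le> (\<Sum>a\<in>E. \<Sum>b\<in>E - {a}. g a b)"
  by (intro sum_nonneg) (use assms in auto)






lemma frob_self: "frob (A::real^'n^'m) A = (norm A)\<^sup>2"
  unfolding frob_def norm_sq_mat norm_sq_vec by (simp add: power2_eq_square)

definition wfun :: "cell set \<Rightarrow> (cell \<Rightarrow> mat32) \<Rightarrow> cell \<Rightarrow> pt \<Rightarrow> real^3" where
  "wfun Th \<mu> V = (if V \<in> Th then wq (\<mu> V) (bary V) (norm (\<mu> V) / hmax Th) else (\<lambda>_. 0))"

lemma wfun_Vh: "wfun Th \<mu> \<in> Vh Th"
  unfolding Vh_def wfun_def by (auto simp: wq_P2)

lemma wfun_grad_b: "V \<in> Th \<Longrightarrow> bgrad (wfun Th \<mu>) V (bary V) = \<mu> V"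
  unfolding bgrad_def wfun_def by (simp add: jac_wq_b)

lemma L1_wfun: "L1 Th y (wfun Th \<mu>) = L2 Th y \<mu>"
proof -
  have "lh Th (bgrad y) (bgrad (wfun Th \<mu>)) = lh Th (bgrad y) (\<lambda>V x. \<mu> V)"
    unfolding lh_def by (intro ext sum.cong refl) (simp add: wfun_grad_b)
  then show ?thesis unfolding L1_def L2_def by simp
qed

lemma wfun_Ker: "\<mu> \<in> KerL2 Th y \<Longrightarrow> wfun Th \<mu> \<in> KerL1 Th y"
  unfolding KerL1_def KerL2_def using L1_wfun wfun_Vh by auto

lemma jac_zero: "jac (\<lambda>_. 0) x = 0"
proof -
  have "((\<lambda>_::pt. 0::real^3) has_derivative (\<lambda>_. 0)) (at x)" by simp
  then have "frechet_derivative (\<lambda>_::pt. 0::real^3) (at x) = (\<lambda>_. 0)"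
    by (simp add: frechet_derivative_at[symmetric])
  then show ?thesis unfolding jac_def pd_def by (simp add: vec_eq_iff)
qed

lemma wfun_ne:
  assumes "V0 \<in> Th" "\<mu> V0 \<noteq> 0"
  shows "wfun Th \<mu> \<noteq> (\<lambda>_ _. 0)"
proof
  assume "wfun Th \<mu> = (\<lambda>_ _. 0)"
  then have "bgrad (wfun Th \<mu>) V0 (bary V0) = 0" unfolding bgrad_def by (simp add: jac_zero)
  then show False using wfun_grad_b[OF assms(1)] assms(2) by simp
qed

lemma ipM_wfun:
  assumes tr: "triangulation \<Omega> Th"
  shows "ipMgrad Th \<mu> (wfun Th \<mu>) = (\<Sum>V\<in>Th. (norm (\<mu> V))\<^sup>2 * measure lebesgue (convex hull V))"
  unfolding ipMgrad_def
proof (intro sum.cong refl)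
  fix V assume V: "V \<in> Th"
  have "integral (convex hull V) (\<lambda>x. frob (\<mu> V) (bgrad (wfun Th \<mu>) V x)) = integral (convex hull V) (\<lambda>x. (norm (\<mu> V))\<^sup>2)"
    using V unfolding bgrad_def wfun_def by (simp add: frob_wq frob_self)
  also have "\<dots> = (norm (\<mu> V))\<^sup>2 * measure lebesgue (convex hull V)"
    by (rule int_const) (use tr V tr_tri tri_lmeas in blast)
  finally show "integral (convex hull V) (\<lambda>x. frob (\<mu> V) (bgrad (wfun Th \<mu>) V x)) = (norm (\<mu> V))\<^sup>2 * measure lebesgue (convex hull V)" .
qed

lemma normM_eq:
  assumes tr: "triangulation \<Omega> Th"
  shows "normM Th \<mu> = sqrt (\<Sum>V\<in>Th. (norm (\<mu> V))\<^sup>2 * measure lebesgue (convex hull V))"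
  unfolding normM_def
proof (intro arg_cong[where f=sqrt] sum.cong refl)
  fix V assume V: "V \<in> Th"
  show "integral (convex hull V) (\<lambda>x. frob (\<mu> V) (\<mu> V)) = (norm (\<mu> V))\<^sup>2 * measure lebesgue (convex hull V)"
    unfolding frob_self by (rule int_const) (use tr V tr_tri tri_lmeas in blast)
qed

lemma hess_wfun:
  assumes tr: "triangulation \<Omega> Th"
  shows "(\<Sum>V\<in>Th. integral (convex hull V) (hess_sq (wfun Th \<mu> V))) = (\<Sum>V\<in>Th. 8 * (norm (\<mu> V) / hmax Th)\<^sup>2 * measure lebesgue (convex hull V))"
proof (intro sum.cong refl)
  fix V assume V: "V \<in> Th"
  have "hess_sq (wfun Th \<mu> V) = (\<lambda>x. 8 * (norm (\<mu> V) / hmax Th)\<^sup>2)"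
    using V unfolding wfun_def by (simp add: hess_wq fun_eq_iff)
  then show "integral (convex hull V) (hess_sq (wfun Th \<mu> V)) = 8 * (norm (\<mu> V) / hmax Th)\<^sup>2 * measure lebesgue (convex hull V)"
    using int_const tr V tr_tri tri_lmeas by metis
qed




lemma hmax_pos: "triangulation \<Omega> Th \<Longrightarrow> hmax Th > 0"
  using hmin_pos hmin_in hmax_ge by (metis less_le_trans)

lemma wfun_pt:
  assumes tr: "triangulation \<Omega> Th" and V: "V \<in> Th" and x: "x \<in> convex hull V"
  shows "norm (wfun Th \<mu> V x) \<le> 2 * norm (\<mu> V) * hmax Th"
    and "norm n \<le> 1 \<Longrightarrow> norm (jac (wfun Th \<mu> V) x *v n) \<le> 3 * norm (\<mu> V)"
proof -
  have t: "is_triangle V" using tr V by (rule tr_tri)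
  have "dist x (bary V) \<le> cdiam V" using t x tri_bary[OF t] by (rule tri_dist)
  then have xb: "norm (x - bary V) \<le> hmax Th" using hmax_ge[OF tr V] by (simp add: dist_norm)
  have H: "hmax Th > 0" using tr by (rule hmax_pos)
  show "norm (wfun Th \<mu> V x) \<le> 2 * norm (\<mu> V) * hmax Th"
    using V wq_bound[OF H xb] unfolding wfun_def by simp
  show "norm n \<le> 1 \<Longrightarrow> norm (jac (wfun Th \<mu> V) x *v n) \<le> 3 * norm (\<mu> V)"
    using V jac_bound[OF H xb] unfolding wfun_def by simp
qed

lemma pair_term:
  assumes tr: "triangulation \<Omega> Th" and V1: "V1 \<in> Th" and V2: "V2 \<in> Th"
    and ab: "a \<in> V1 \<inter> V2" "b \<in> V1 \<inter> V2"
  shows "seg_int a b (\<lambda>x. hmax Th powr (-1) * (norm ((jac (wfun Th \<mu> V1) x - jac (wfun Th \<mu> V2) x) *v out_normal V1 a b))\<^sup>2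
         + hmax Th powr (-3) * (norm (wfun Th \<mu> V1 x - wfun Th \<mu> V2 x))\<^sup>2) \<le> 26 * ((norm (\<mu> V1))\<^sup>2 + (norm (\<mu> V2))\<^sup>2)"
    (is "seg_int a b ?g \<le> _")
proof -
  let ?H = "hmax Th"
  let ?s1 = "norm (\<mu> V1)" and ?s2 = "norm (\<mu> V2)"
  let ?n = "out_normal V1 a b"
  have H: "?H > 0" using tr by (rule hmax_pos)
  have t1: "is_triangle V1" using tr V1 by (rule tr_tri)
  have "dist a b \<le> cdiam V1" using ab by (intro tri_dist[OF t1]) (auto intro: hull_inc)
  then have dab: "dist a b \<le> ?H" using hmax_ge[OF tr V1] by simp
  have pt: "?g x \<le> 26 * (?s1\<^sup>2 + ?s2\<^sup>2) / ?H" if x1: "x \<in> convex hull V1" and x2: "x \<in> convex hull V2" for x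
  proof (rule jump_pt[OF H])
    have "norm ((jac (wfun Th \<mu> V1) x - jac (wfun Th \<mu> V2) x) *v ?n)
        \<le> norm (jac (wfun Th \<mu> V1) x *v ?n) + norm (jac (wfun Th \<mu> V2) x *v ?n)"
      unfolding matrix_vector_mult_diff_rdistrib by (rule norm_triangle_ineq4)
    also have "\<dots> \<le> 3 * ?s1 + 3 * ?s2"
      by (rule add_mono[OF wfun_pt(2)[OF tr V1 x1 out_normal_le] wfun_pt(2)[OF tr V2 x2 out_normal_le]])
    finally show "norm ((jac (wfun Th \<mu> V1) x - jac (wfun Th \<mu> V2) x) *v ?n) \<le> 3 * (?s1 + ?s2)" by simp
    have "norm (wfun Th \<mu> V1 x - wfun Th \<mu> V2 x) \<le> norm (wfun Th \<mu> V1 x) + norm (wfun Th \<mu> V2 x)"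
      by (rule norm_triangle_ineq4)
    also have "\<dots> \<le> 2 * ?s1 * ?H + 2 * ?s2 * ?H"
      by (rule add_mono[OF wfun_pt(1)[OF tr V1 x1] wfun_pt(1)[OF tr V2 x2]])
    finally show "norm (wfun Th \<mu> V1 x - wfun Th \<mu> V2 x) \<le> 2 * ?H * (?s1 + ?s2)" by (simp add: algebra_simps)
  qed auto
  have "seg_int a b ?g \<le> ?H * (26 * (?s1\<^sup>2 + ?s2\<^sup>2) / ?H)"
  proof (rule seg_int_le[OF dab])
    show "0 \<le> 26 * (?s1\<^sup>2 + ?s2\<^sup>2) / ?H" using H by simp
    fix t :: real assume "t \<in> {0..1}"
    then show "?g (a + t *\<^sub>R (b - a)) \<le> 26 * (?s1\<^sup>2 + ?s2\<^sup>2) / ?H"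
      using ab by (intro pt seg_in_hull) auto
  qed
  also have "\<dots> = 26 * (?s1\<^sup>2 + ?s2\<^sup>2)" using H by simp
  finally show ?thesis .
qed

lemma pair_term_nonneg:
  "0 \<le> seg_int a b (\<lambda>x. h powr (-1) * (norm (M x))\<^sup>2 + h powr (-3) * (norm (v x))\<^sup>2)"
  by (rule seg_int_nonneg) simp




lemma bd_term:
  assumes tr: "triangulation \<Omega> Th" and V: "V \<in> Th" and ab: "a \<in> V" "b \<in> V"
  shows "seg_int a b (\<lambda>x. hmax Th powr (-1) * (norm (jac (wfun Th \<mu> V) x *v out_normal V a b))\<^sup>2
         + hmax Th powr (-3) * (norm (wfun Th \<mu> V x))\<^sup>2) \<le> 26 * (norm (\<mu> V))\<^sup>2"
    (is "seg_int a b ?g \<le> _")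
proof -
  let ?H = "hmax Th"
  let ?s1 = "norm (\<mu> V)"
  have H: "?H > 0" using tr by (rule hmax_pos)
  have t1: "is_triangle V" using tr V by (rule tr_tri)
  have "dist a b \<le> cdiam V" using ab by (intro tri_dist[OF t1]) (auto intro: hull_inc)
  then have dab: "dist a b \<le> ?H" using hmax_ge[OF tr V] by simp
  have pt: "?g x \<le> 26 * (?s1\<^sup>2 + 0\<^sup>2) / ?H" if x1: "x \<in> convex hull V" for x
  proof (rule jump_pt[OF H])
    show "norm (jac (wfun Th \<mu> V) x *v out_normal V a b) \<le> 3 * (?s1 + 0)"
      using wfun_pt(2)[OF tr V x1 out_normal_le] by simp
    show "norm (wfun Th \<mu> V x) \<le> 2 * ?H * (?s1 + 0)"
      using wfun_pt(1)[OF tr V x1] by (simp add: algebra_simps)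
  qed auto
  have "seg_int a b ?g \<le> ?H * (26 * (?s1\<^sup>2 + 0\<^sup>2) / ?H)"
  proof (rule seg_int_le[OF dab])
    show "0 \<le> 26 * (?s1\<^sup>2 + 0\<^sup>2) / ?H" using H by simp
    fix t :: real assume "t \<in> {0..1}"
    then show "?g (a + t *\<^sub>R (b - a)) \<le> 26 * (?s1\<^sup>2 + 0\<^sup>2) / ?H"
      using ab by (intro pt seg_in_hull) auto
  qed
  also have "\<dots> = 26 * ?s1\<^sup>2" using H by simp
  finally show ?thesis .
qed

lemma bdry_bound:
  assumes tr: "triangulation \<Omega> Th"
  shows "bdry_jumps \<Gamma>D Th (wfun Th \<mu>) \<le> 416 * (\<Sum>V\<in>Th. (norm (\<mu> V))\<^sup>2)"
    and "0 \<le> bdry_jumps \<Gamma>D Th (wfun Th \<mu>)"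
proof -
  let ?H = "hmax Th"
  define Q where "Q = {(V, E). V \<in> Th \<and> E \<subseteq> V \<and> card E = 2 \<and> (\<forall>a\<in>E. \<forall>b\<in>E. open_segment a b \<subseteq> \<Gamma>D)}"
  define F where "F = (\<lambda>(V::cell, E::pt set). (1/2) * (\<Sum>a\<in>E. \<Sum>b\<in>E - {a}. seg_int a b (\<lambda>x.
           ?H powr (-1) * (norm (jac (wfun Th \<mu> V) x *v out_normal V a b))\<^sup>2
         + ?H powr (-3) * (norm (wfun Th \<mu> V x))\<^sup>2)))"
  have bj: "bdry_jumps \<Gamma>D Th (wfun Th \<mu>) = sum F Q"
    unfolding bdry_jumps_def Q_def F_def Let_def ..
  have fin: "finite (Sigma Th Pow)" using tr_finite[OF tr] tr_tri[OF tr] tri_finite by blast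
  have QS: "Q \<subseteq> Sigma Th Pow" unfolding Q_def by auto
  have Fle: "F p \<le> 52 * (norm (\<mu> (fst p)))\<^sup>2" if "p \<in> Q" for p
  proof -
    obtain V E where p: "p = (V, E)" "V \<in> Th" "E \<subseteq> V" "card E = 2" using \<open>p \<in> Q\<close> unfolding Q_def by auto
    have "finite E" using p(4) card.infinite by fastforce
    have "(\<Sum>a\<in>E. \<Sum>b\<in>E - {a}. seg_int a b (\<lambda>x.
           ?H powr (-1) * (norm (jac (wfun Th \<mu> V) x *v out_normal V a b))\<^sup>2
         + ?H powr (-3) * (norm (wfun Th \<mu> V x))\<^sup>2)) \<le> 4 * (26 * (norm (\<mu> V))\<^sup>2)"
    proof (rule double_sum_le[OF \<open>finite E\<close> p(4)])
      show "0 \<le> 26 * (norm (\<mu> V))\<^sup>2" by simp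
      fix a b assume "a \<in> E" "b \<in> E - {a}"
      then show "seg_int a b (\<lambda>x.
           ?H powr (-1) * (norm (jac (wfun Th \<mu> V) x *v out_normal V a b))\<^sup>2
         + ?H powr (-3) * (norm (wfun Th \<mu> V x))\<^sup>2) \<le> 26 * (norm (\<mu> V))\<^sup>2"
        by (intro bd_term[OF tr]) (use p in auto)
    qed
    then show ?thesis unfolding F_def p by simp
  qed
  have F0: "0 \<le> F p" for p
  proof -
    obtain V E where p: "p = (V, E)" by force
    show ?thesis unfolding F_def p prod.case
      by (intro mult_nonneg_nonneg double_sum_nonneg pair_term_nonneg) simp_all
  qed
  have "sum F Q \<le> (\<Sum>p\<in>Q. 52 * (norm (\<mu> (fst p)))\<^sup>2)" by (rule sum_mono) (rule Fle)
  also have "\<dots> \<le> (\<Sum>p\<in>Sigma Th Pow. 52 * (norm (\<mu> (fst p)))\<^sup>2)"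
    by (rule sum_mono2[OF fin QS]) auto
  also have "\<dots> = (\<Sum>V\<in>Th. \<Sum>E\<in>Pow V. 52 * (norm (\<mu> V))\<^sup>2)"
    using fin tr_finite[OF tr] tr_tri[OF tr] tri_finite by (subst sum.Sigma) (auto simp: case_prod_beta)
  also have "\<dots> = (\<Sum>V\<in>Th. 8 * (52 * (norm (\<mu> V))\<^sup>2))"
  proof (rule sum.cong[OF refl])
    fix V assume "V \<in> Th"
    then have "card V = 3" "finite V" using tr_tri[OF tr] tri_card tri_finite by auto
    then show "(\<Sum>E\<in>Pow V. 52 * (norm (\<mu> V))\<^sup>2) = 8 * (52 * (norm (\<mu> V))\<^sup>2)" by (simp add: card_Pow)
  qed
  also have "\<dots> = 416 * (\<Sum>V\<in>Th. (norm (\<mu> V))\<^sup>2)" by (simp add: sum_distrib_left)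
  finally show "bdry_jumps \<Gamma>D Th (wfun Th \<mu>) \<le> 416 * (\<Sum>V\<in>Th. (norm (\<mu> V))\<^sup>2)" using bj by simp
  show "0 \<le> bdry_jumps \<Gamma>D Th (wfun Th \<mu>)" unfolding bj by (rule sum_nonneg) (rule F0)
qed




lemma int_bound:
  assumes tr: "triangulation \<Omega> Th" and D: "0 \<le> D"
    and deg: "\<And>V1. V1 \<in> Th \<Longrightarrow> real (card {V2\<in>Th. V2 \<noteq> V1 \<and> card (V1 \<inter> V2) = 2}) \<le> D"
  shows "int_jumps Th (wfun Th \<mu>) \<le> 52 * D * (\<Sum>V\<in>Th. (norm (\<mu> V))\<^sup>2)"
    and "0 \<le> int_jumps Th (wfun Th \<mu>)"
proof -
  let ?H = "hmax Th"
  let ?s = "\<lambda>V. (norm (\<mu> V))\<^sup>2"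
  define N where "N = (\<lambda>V1. {V2\<in>Th. V2 \<noteq> V1 \<and> card (V1 \<inter> V2) = 2})"
  define P where "P = {(V1, V2). V1 \<in> Th \<and> V2 \<in> Th \<and> V1 \<noteq> V2 \<and> card (V1 \<inter> V2) = 2}"
  define F where "F = (\<lambda>(V1::cell, V2::cell). (1/2) * (1/2) * (\<Sum>a\<in>V1 \<inter> V2. \<Sum>b\<in>(V1 \<inter> V2) - {a}. seg_int a b (\<lambda>x.
           ?H powr (-1) * (norm ((jac (wfun Th \<mu> V1) x - jac (wfun Th \<mu> V2) x) *v out_normal V1 a b))\<^sup>2
         + ?H powr (-3) * (norm (wfun Th \<mu> V1 x - wfun Th \<mu> V2 x))\<^sup>2)))"
  have ij: "int_jumps Th (wfun Th \<mu>) = sum F P"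
    unfolding int_jumps_def P_def F_def Let_def ..
  have PS: "P = Sigma Th N" unfolding P_def N_def by auto
  have finT: "finite Th" by (rule tr_finite[OF tr])
  have Fle: "F p \<le> 26 * (?s (fst p) + ?s (snd p))" if "p \<in> P" for p
  proof -
    obtain V1 V2 where p: "p = (V1, V2)" "V1 \<in> Th" "V2 \<in> Th" "card (V1 \<inter> V2) = 2"
      using \<open>p \<in> P\<close> unfolding P_def by auto
    have "finite (V1 \<inter> V2)" by (rule card_ge_0_finite) (simp add: p(4))
    have "(\<Sum>a\<in>V1 \<inter> V2. \<Sum>b\<in>(V1 \<inter> V2) - {a}. seg_int a b (\<lambda>x.
           ?H powr (-1) * (norm ((jac (wfun Th \<mu> V1) x - jac (wfun Th \<mu> V2) x) *v out_normal V1 a b))\<^sup>2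
         + ?H powr (-3) * (norm (wfun Th \<mu> V1 x - wfun Th \<mu> V2 x))\<^sup>2)) \<le> 4 * (26 * (?s V1 + ?s V2))"
    proof (rule double_sum_le[OF \<open>finite (V1 \<inter> V2)\<close> p(4)])
      show "0 \<le> 26 * (?s V1 + ?s V2)" by simp
      fix a b assume "a \<in> V1 \<inter> V2" "b \<in> V1 \<inter> V2 - {a}"
      then show "seg_int a b (\<lambda>x.
           ?H powr (-1) * (norm ((jac (wfun Th \<mu> V1) x - jac (wfun Th \<mu> V2) x) *v out_normal V1 a b))\<^sup>2
         + ?H powr (-3) * (norm (wfun Th \<mu> V1 x - wfun Th \<mu> V2 x))\<^sup>2) \<le> 26 * (?s V1 + ?s V2)"
        by (intro pair_term[OF tr]) (use p in auto)
    qed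
    then show ?thesis unfolding F_def p by simp
  qed
  have F0: "0 \<le> F p" for p
  proof -
    obtain V1 V2 where p: "p = (V1, V2)" by force
    show ?thesis unfolding F_def p prod.case
      by (intro mult_nonneg_nonneg double_sum_nonneg pair_term_nonneg) simp_all
  qed
  have fst_sum: "(\<Sum>p\<in>P. ?s (fst p)) \<le> D * (\<Sum>V\<in>Th. ?s V)"
  proof -
    have "(\<Sum>p\<in>P. ?s (fst p)) = (\<Sum>V1\<in>Th. \<Sum>V2\<in>N V1. ?s V1)"
      unfolding PS using finT N_def by (subst sum.Sigma) (auto simp: case_prod_beta)
    also have "\<dots> = (\<Sum>V1\<in>Th. real (card (N V1)) * ?s V1)" by simp
    also have "\<dots> \<le> (\<Sum>V1\<in>Th. D * ?s V1)"
      by (intro sum_mono mult_right_mono) (auto simp: N_def deg)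
    finally show ?thesis by (simp add: sum_distrib_left)
  qed
  have swap: "(\<Sum>p\<in>P. ?s (snd p)) = (\<Sum>p\<in>P. ?s (fst p))"
    by (rule sum.reindex_bij_witness[where i=prod.swap and j=prod.swap]) (auto simp: P_def Int_commute)
  have "sum F P \<le> (\<Sum>p\<in>P. 26 * (?s (fst p) + ?s (snd p)))" by (rule sum_mono) (rule Fle)
  also have "\<dots> = 26 * ((\<Sum>p\<in>P. ?s (fst p)) + (\<Sum>p\<in>P. ?s (snd p)))"
    by (simp add: sum.distrib sum_distrib_left)
  also have "\<dots> \<le> 26 * (D * (\<Sum>V\<in>Th. ?s V) + D * (\<Sum>V\<in>Th. ?s V))"
    using fst_sum swap by simp
  also have "\<dots> = 52 * D * (\<Sum>V\<in>Th. ?s V)" by simp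
  finally show "int_jumps Th (wfun Th \<mu>) \<le> 52 * D * (\<Sum>V\<in>Th. ?s V)" using ij by simp
  show "0 \<le> int_jumps Th (wfun Th \<mu>)" unfolding ij by (rule sum_nonneg) (rule F0)
qed




lemma final_arith:
  fixes \<beta> hm S Mq NH2 amin K :: real
  assumes "0 < S" "0 < NH2" "NH2 \<le> K * S" "amin * S \<le> Mq" "0 < Mq" "0 \<le> \<beta>" "0 \<le> hm"
    and c: "\<beta>\<^sup>2 * hm\<^sup>2 * K \<le> amin"
  shows "\<beta> * hm \<le> Mq / (sqrt Mq * sqrt NH2)"
proof -
  have e: "Mq / (sqrt Mq * sqrt NH2) = sqrt (Mq / NH2)"
  proof -
    have sM: "sqrt Mq > 0" using assms by simp
    have "Mq / (sqrt Mq * sqrt NH2) = (sqrt Mq * sqrt Mq) / (sqrt Mq * sqrt NH2)" using assms by simp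
    also have "\<dots> = sqrt Mq / sqrt NH2" using sM by (simp only: mult_divide_mult_cancel_left_if) simp
    finally have "Mq / (sqrt Mq * sqrt NH2) = sqrt Mq / sqrt NH2" .
    then show ?thesis by (simp add: real_sqrt_divide)
  qed
  have "(\<beta> * hm)\<^sup>2 * NH2 \<le> (\<beta> * hm)\<^sup>2 * (K * S)" using assms by (intro mult_left_mono) auto
  also have "\<dots> = (\<beta>\<^sup>2 * hm\<^sup>2 * K) * S" by (simp add: power_mult_distrib)
  also have "\<dots> \<le> amin * S" using c assms by (intro mult_right_mono) auto
  also have "\<dots> \<le> Mq" by (rule assms)
  finally have "(\<beta> * hm)\<^sup>2 \<le> Mq / NH2" using assms by (simp add: pos_le_divide_eq)
  then have "sqrt ((\<beta> * hm)\<^sup>2) \<le> sqrt (Mq / NH2)" by (rule real_sqrt_le_mono)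
  then show ?thesis using e assms by simp
qed


lemma gen1: fixes s X Y Z :: real
  assumes "X \<le> Y" "(2 * s + 1) * 1 \<le> Z" "0 \<le> X" "0 \<le> s"
  shows "1792 * s + 3328 * X \<le> 4800 * (Y + Z)"
  using assms by simp

lemma const_arith:
  fixes \<sigma> \<kappa> hm :: real
  assumes s: "\<sigma> > 0"
  shows "(1 / (40 * (\<sigma>\<^sup>2 + 1) * (\<bar>\<kappa>\<bar> + 1)))\<^sup>2 * hm\<^sup>2 * (448 + 52 * (16 * \<kappa>\<^sup>2 * \<sigma>\<^sup>2)) \<le> pi * (hm / (2 * \<sigma>))\<^sup>2"
proof -
  define A where "A = \<sigma>\<^sup>2 + 1"
  define B where "B = \<bar>\<kappa>\<bar> + 1"
  have A: "A > 0" "A \<ge> 1" "A \<ge> \<sigma>\<^sup>2" unfolding A_def using zero_le_power2[of \<sigma>] by linarith+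
  have B: "B > 0" "B \<ge> 1" "B \<ge> \<bar>\<kappa>\<bar>" unfolding B_def by auto
  have AAA: "A * 1 \<le> A * A" using A by (intro mult_left_mono) auto
  have AA1: "\<sigma>\<^sup>2 \<le> A\<^sup>2" using AAA A(3) unfolding power2_eq_square by linarith
  have AA2: "\<sigma>\<^sup>2 * \<sigma>\<^sup>2 \<le> A\<^sup>2" unfolding power2_eq_square[of A] by (rule mult_mono) (use A in auto)
  have AA: "A\<^sup>2 \<ge> \<sigma>\<^sup>2" "A\<^sup>2 \<ge> \<sigma>\<^sup>2 * \<sigma>\<^sup>2" using AA1 AA2 by auto
  have BB1: "1 \<le> B\<^sup>2" using B(2) by (rule one_le_power)
  have "\<bar>\<kappa>\<bar>\<^sup>2 \<le> B\<^sup>2" by (rule power_mono) (use B in auto)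
  then have BB: "B\<^sup>2 \<ge> 1" "B\<^sup>2 \<ge> \<kappa>\<^sup>2" using BB1 by simp_all
  have key: "4 * \<sigma>\<^sup>2 * (448 + 832 * \<kappa>\<^sup>2 * \<sigma>\<^sup>2) \<le> 3 * (1600 * A\<^sup>2 * B\<^sup>2)"
  proof -
    have A2: "A\<^sup>2 * B\<^sup>2 = (\<sigma>\<^sup>2 * \<sigma>\<^sup>2) * B\<^sup>2 + (2 * \<sigma>\<^sup>2 + 1) * B\<^sup>2"
      unfolding A_def by (simp add: power2_eq_square algebra_simps)
    have t1: "(\<sigma>\<^sup>2 * \<sigma>\<^sup>2) * \<kappa>\<^sup>2 \<le> (\<sigma>\<^sup>2 * \<sigma>\<^sup>2) * B\<^sup>2" using BB by (intro mult_left_mono) auto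
    have t2: "(2 * \<sigma>\<^sup>2 + 1) * 1 \<le> (2 * \<sigma>\<^sup>2 + 1) * B\<^sup>2" using BB by (intro mult_left_mono) auto
    have e1: "4 * \<sigma>\<^sup>2 * (448 + 832 * \<kappa>\<^sup>2 * \<sigma>\<^sup>2) = 1792 * \<sigma>\<^sup>2 + 3328 * ((\<sigma>\<^sup>2 * \<sigma>\<^sup>2) * \<kappa>\<^sup>2)"
      by (simp add: algebra_simps)
    have e2: "3 * (1600 * A\<^sup>2 * B\<^sup>2) = 4800 * (A\<^sup>2 * B\<^sup>2)" by simp
    have nn: "0 \<le> (\<sigma>\<^sup>2 * \<sigma>\<^sup>2) * \<kappa>\<^sup>2" "0 \<le> \<sigma>\<^sup>2" by simp_all
    show ?thesis unfolding e1 e2 A2 by (rule gen1[OF t1 t2 nn])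
  qed
  have "pi \<ge> 3" using pi_gt3 by simp
  have P0: "0 < 1600 * A\<^sup>2 * B\<^sup>2" using A B by simp
  have "3 * (1600 * A\<^sup>2 * B\<^sup>2) \<le> pi * (1600 * A\<^sup>2 * B\<^sup>2)"
    using \<open>pi \<ge> 3\<close> P0 by (intro mult_right_mono) auto
  with key have key2: "(448 + 832 * \<kappa>\<^sup>2 * \<sigma>\<^sup>2) * (4 * \<sigma>\<^sup>2) \<le> pi * (1600 * A\<^sup>2 * B\<^sup>2)"
    by (simp add: mult.commute)
  have Q0: "0 < 4 * \<sigma>\<^sup>2" using s by simp
  have fr: "(448 + 832 * \<kappa>\<^sup>2 * \<sigma>\<^sup>2) / (1600 * A\<^sup>2 * B\<^sup>2) \<le> pi / (4 * \<sigma>\<^sup>2)"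
    using key2 P0 Q0 by (simp add: divide_le_eq le_divide_eq mult.commute mult.left_commute)
  have e1: "(1 / (40 * A * B))\<^sup>2 * hm\<^sup>2 * (448 + 52 * (16 * \<kappa>\<^sup>2 * \<sigma>\<^sup>2)) = hm\<^sup>2 * ((448 + 832 * \<kappa>\<^sup>2 * \<sigma>\<^sup>2) / (1600 * A\<^sup>2 * B\<^sup>2))"
    by (simp add: power_mult_distrib power_divide)
  have e2: "pi * (hm / (2 * \<sigma>))\<^sup>2 = hm\<^sup>2 * (pi / (4 * \<sigma>\<^sup>2))"
    by (simp add: power_mult_distrib power_divide)
  have "(1 / (40 * A * B))\<^sup>2 * hm\<^sup>2 * (448 + 52 * (16 * \<kappa>\<^sup>2 * \<sigma>\<^sup>2)) \<le> pi * (hm / (2 * \<sigma>))\<^sup>2"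
    unfolding e1 e2 using fr by (intro mult_left_mono) auto
  then show ?thesis unfolding A_def B_def .
qed





lemma mu_nz:
  assumes "\<mu> \<in> KerL2 Th y" "\<mu> \<noteq> (\<lambda>_. 0)"
  shows "\<exists>V\<in>Th. \<mu> V \<noteq> 0"
proof -
  obtain V where "\<mu> V \<noteq> 0" using assms(2) by auto
  moreover have "\<mu> \<in> Mh Th" using assms(1) unfolding KerL2_def by simp
  ultimately show ?thesis unfolding Mh_def by blast
qed

lemma core:
  assumes tr: "triangulation \<Omega> Th" and sr: "shape_regular \<sigma> Th" and qu: "quasi_uniform \<kappa> Th"
    and mu: "\<mu> \<in> KerL2 Th y" and mu0: "\<mu> \<noteq> (\<lambda>_. 0)"
  shows "1 / (40 * (\<sigma>\<^sup>2 + 1) * (\<bar>\<kappa>\<bar> + 1)) * hmin Th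
     \<le> ipMgrad Th \<mu> (wfun Th \<mu>) / (normM Th \<mu> * normH2h \<Gamma>D Th (wfun Th \<mu>))"
proof -
  let ?H = "hmax Th" and ?hm = "hmin Th"
  let ?a = "\<lambda>V. measure lebesgue (convex hull V)"
  let ?s = "\<lambda>V. (norm (\<mu> V))\<^sup>2"
  define S where "S = (\<Sum>V\<in>Th. ?s V)"
  define Mq where "Mq = (\<Sum>V\<in>Th. ?s V * ?a V)"
  define Hs where "Hs = (\<Sum>V\<in>Th. 8 * (norm (\<mu> V) / ?H)\<^sup>2 * ?a V)"
  define D where "D = 16 * \<kappa>\<^sup>2 * \<sigma>\<^sup>2"
  have finT: "finite Th" by (rule tr_finite[OF tr])
  have H: "?H > 0" by (rule hmax_pos[OF tr])
  have hm: "?hm > 0" by (rule hmin_pos[OF tr])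
  obtain V0 where V0: "V0 \<in> Th" "?hm = cdiam V0" using hmin_in[OF tr] by blast
  have tri: "\<And>V. V \<in> Th \<Longrightarrow> is_triangle V" using tr_tri[OF tr] .
  have sp: "\<sigma> > 0" using tri_area_ge[OF tri[OF V0(1)]] sr V0(1) unfolding shape_regular_def by blast
  define amin where "amin = pi * (?hm / (2 * \<sigma>))\<^sup>2"
  have amin_pos: "amin > 0" unfolding amin_def using hm sp by simp
  have amin_le: "amin \<le> ?a V" if V: "V \<in> Th" for V
  proof -
    have a1: "pi * (cdiam V / (2 * \<sigma>))\<^sup>2 \<le> ?a V"
      using tri_area_ge[OF tri[OF V]] sr V unfolding shape_regular_def by blast
    have "(?hm / (2 * \<sigma>))\<^sup>2 \<le> (cdiam V / (2 * \<sigma>))\<^sup>2"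
      using hmin_le[OF tr V] hm sp by (intro power_mono divide_right_mono) auto
    then have "pi * (?hm / (2 * \<sigma>))\<^sup>2 \<le> pi * (cdiam V / (2 * \<sigma>))\<^sup>2"
      by (intro mult_left_mono) auto
    with a1 show ?thesis unfolding amin_def by linarith
  qed
  have Hk: "?H \<le> \<kappa> * ?hm" using qu V0 unfolding quasi_uniform_def by auto
  have D0: "0 \<le> D" unfolding D_def by simp
  have deg: "real (card {V2\<in>Th. V2 \<noteq> V1 \<and> card (V1 \<inter> V2) = 2}) \<le> D" if V1: "V1 \<in> Th" for V1
  proof -
    define c where "c = real (card {V2\<in>Th. V2 \<noteq> V1 \<and> card (V1 \<inter> V2) = 2})"
    have c0: "c \<ge> 0" unfolding c_def by simp
    have "c * amin \<le> pi * (2 * ?H)\<^sup>2" unfolding c_def by (rule neighbors_card[OF tr V1 amin_le])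
    then have "pi * (c * (?hm / (2 * \<sigma>))\<^sup>2) \<le> pi * (4 * ?H\<^sup>2)"
      unfolding amin_def by (simp add: power_mult_distrib algebra_simps)
    then have "c * (?hm / (2 * \<sigma>))\<^sup>2 \<le> 4 * ?H\<^sup>2" by simp
    then have "c * ?hm\<^sup>2 \<le> 16 * \<sigma>\<^sup>2 * ?H\<^sup>2"
      using sp by (simp add: power_divide power_mult_distrib field_simps)
    also have "?H\<^sup>2 \<le> (\<kappa> * ?hm)\<^sup>2" using H Hk by (intro power_mono) auto
    then have "16 * \<sigma>\<^sup>2 * ?H\<^sup>2 \<le> 16 * \<sigma>\<^sup>2 * (\<kappa> * ?hm)\<^sup>2" by (intro mult_left_mono) auto
    finally have "c * ?hm\<^sup>2 \<le> D * ?hm\<^sup>2" unfolding D_def by (simp add: power_mult_distrib algebra_simps)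
    then show ?thesis using hm unfolding c_def by simp
  qed
  have ij: "int_jumps Th (wfun Th \<mu>) \<le> 52 * D * S" "0 \<le> int_jumps Th (wfun Th \<mu>)"
    using int_bound[OF tr D0 deg, of \<mu>] unfolding S_def by auto
  have bj: "bdry_jumps \<Gamma>D Th (wfun Th \<mu>) \<le> 416 * S" "0 \<le> bdry_jumps \<Gamma>D Th (wfun Th \<mu>)"
    using bdry_bound[OF tr, of \<Gamma>D \<mu>] unfolding S_def by auto
  have ip: "ipMgrad Th \<mu> (wfun Th \<mu>) = Mq" unfolding Mq_def by (rule ipM_wfun[OF tr])
  have nM: "normM Th \<mu> = sqrt Mq" unfolding Mq_def by (rule normM_eq[OF tr])
  define NH2 where "NH2 = Hs + int_jumps Th (wfun Th \<mu>) + bdry_jumps \<Gamma>D Th (wfun Th \<mu>)"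
  have nH: "normH2h \<Gamma>D Th (wfun Th \<mu>) = sqrt NH2"
    unfolding normH2h_def NH2_def Hs_def hess_wfun[OF tr] ..
  obtain V1 where V1: "V1 \<in> Th" "\<mu> V1 \<noteq> 0" using mu_nz[OF mu mu0] by blast
  have s1: "?s V1 > 0" using V1 by simp
  have "?s V1 \<le> S" unfolding S_def by (rule member_le_sum[OF V1(1)]) (auto simp: finT)
  then have Spos: "S > 0" using s1 by linarith
  have "amin * S = (\<Sum>V\<in>Th. ?s V * amin)" unfolding S_def by (simp add: sum_distrib_left mult.commute)
  also have "\<dots> \<le> Mq" unfolding Mq_def by (intro sum_mono mult_left_mono amin_le) auto
  finally have Mq_ge: "amin * S \<le> Mq" .
  have Mq_pos: "Mq > 0" using Mq_ge amin_pos Spos by (smt (verit) mult_pos_pos)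
  have Hs_le: "Hs \<le> 32 * S"
  proof -
    have "Hs \<le> (\<Sum>V\<in>Th. 32 * ?s V)" unfolding Hs_def
    proof (rule sum_mono)
      fix V assume V: "V \<in> Th"
      have "?a V \<le> pi * (cdiam V)\<^sup>2" by (rule tri_area_le[OF tri[OF V]])
      also have "\<dots> \<le> 4 * ?H\<^sup>2"
        using pi_less_4 hmax_ge[OF tr V] tri_cdiam_pos[OF tri[OF V]]
        by (intro mult_mono power_mono) auto
      finally have "8 * (norm (\<mu> V) / ?H)\<^sup>2 * ?a V \<le> 8 * (norm (\<mu> V) / ?H)\<^sup>2 * (4 * ?H\<^sup>2)"
        by (intro mult_left_mono) auto
      also have "\<dots> = 32 * ?s V" using H by (simp add: power_divide)
      finally show "8 * (norm (\<mu> V) / ?H)\<^sup>2 * ?a V \<le> 32 * ?s V" .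
    qed
    then show ?thesis unfolding S_def by (simp add: sum_distrib_left)
  qed
  have Hs_pos: "Hs > 0"
  proof -
    have "8 * (norm (\<mu> V1) / ?H)\<^sup>2 * ?a V1 > 0"
      using V1 H amin_le[OF V1(1)] amin_pos by simp
    also have "8 * (norm (\<mu> V1) / ?H)\<^sup>2 * ?a V1 \<le> Hs" unfolding Hs_def
      by (rule member_le_sum[OF V1(1)]) (auto simp: finT intro!: mult_nonneg_nonneg measure_nonneg)
    finally show ?thesis .
  qed
  have NH2_pos: "NH2 > 0" unfolding NH2_def using Hs_pos ij(2) bj(2) by linarith
  have NH2_le: "NH2 \<le> (448 + 52 * D) * S" unfolding NH2_def using Hs_le ij(1) bj(1) by (simp add: algebra_simps)
  have c: "(1 / (40 * (\<sigma>\<^sup>2 + 1) * (\<bar>\<kappa>\<bar> + 1)))\<^sup>2 * ?hm\<^sup>2 * (448 + 52 * D) \<le> amin"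
    unfolding amin_def D_def by (rule const_arith[OF sp])
  show ?thesis unfolding ip nM nH
    by (rule final_arith[OF Spos NH2_pos NH2_le Mq_ge Mq_pos _ _ c]) (use hm in auto)
qed


theorem lemma4p8:
  fixes \<Omega> \<Gamma>D :: "(real^2) set" and \<sigma> \<kappa> :: real
  assumes "open \<Omega>" and "connected \<Omega>" and "bounded \<Omega>" and "lipschitz_boundary \<Omega>"
    and "openin (top_of_set (frontier \<Omega>)) \<Gamma>D" and "\<Gamma>D \<noteq> {}"
  shows "\<exists>\<beta>'>0. \<forall>Th. triangulation \<Omega> Th \<and> shape_regular \<sigma> Th \<and> quasi_uniform \<kappa> Th \<longrightarrow>
           (\<forall>y\<in>Ah Th.
              (INF \<mu>\<in>KerL2 Th y - {\<lambda>_. 0}. SUP w\<in>KerL1 Th y - {\<lambda>_ _. 0}.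
                 ereal (ipMgrad Th \<mu> w / (normM Th \<mu> * normH2h \<Gamma>D Th w)))
              \<ge> ereal (\<beta>' * hmin Th))"
proof (intro exI[of _ "1 / (40 * (\<sigma>\<^sup>2 + 1) * (\<bar>\<kappa>\<bar> + 1))"] conjI allI impI ballI)
  have "0 < 40 * (\<sigma>\<^sup>2 + 1) * (\<bar>\<kappa>\<bar> + 1)"
  proof -
    have "0 < \<sigma>\<^sup>2 + 1" using zero_le_power2[of \<sigma>] by linarith
    then show ?thesis by (intro mult_pos_pos) auto
  qed
  then show "0 < 1 / (40 * (\<sigma>\<^sup>2 + 1) * (\<bar>\<kappa>\<bar> + 1))" by simp
next
  fix Th y
  assume A: "triangulation \<Omega> Th \<and> shape_regular \<sigma> Th \<and> quasi_uniform \<kappa> Th" and y: "y \<in> Ah Th"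
  show "ereal (1 / (40 * (\<sigma>\<^sup>2 + 1) * (\<bar>\<kappa>\<bar> + 1)) * hmin Th)
     \<le> (INF \<mu>\<in>KerL2 Th y - {\<lambda>_. 0}. SUP w\<in>KerL1 Th y - {\<lambda>_ _. 0}.
                 ereal (ipMgrad Th \<mu> w / (normM Th \<mu> * normH2h \<Gamma>D Th w)))"
  proof (rule INF_greatest)
    fix \<mu> assume mu: "\<mu> \<in> KerL2 Th y - {\<lambda>_. 0}"
    obtain V1 where V1: "V1 \<in> Th" "\<mu> V1 \<noteq> 0" using mu_nz[of \<mu> Th y] mu by auto
    have w: "wfun Th \<mu> \<in> KerL1 Th y - {\<lambda>_ _. 0}"
      using wfun_Ker[of \<mu> Th y] wfun_ne[of V1 Th \<mu>] V1 mu by auto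
    have c: "1 / (40 * (\<sigma>\<^sup>2 + 1) * (\<bar>\<kappa>\<bar> + 1)) * hmin Th
     \<le> ipMgrad Th \<mu> (wfun Th \<mu>) / (normM Th \<mu> * normH2h \<Gamma>D Th (wfun Th \<mu>))"
      using core[of \<Omega> Th \<sigma> \<kappa> \<mu> y \<Gamma>D] A mu by auto
    show "ereal (1 / (40 * (\<sigma>\<^sup>2 + 1) * (\<bar>\<kappa>\<bar> + 1)) * hmin Th)
      \<le> (SUP w\<in>KerL1 Th y - {\<lambda>_ _. 0}. ereal (ipMgrad Th \<mu> w / (normM Th \<mu> * normH2h \<Gamma>D Th w)))"
      by (rule SUP_upper2[OF w]) (use c in simp)
  qed
qed


end
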